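(* Let $k\ge 3$, $n_1=\cdots=n_k\ge 2$, $r\in[k]$, and let $G,G'\in\mathcal{O}(CS^r_{n_1,\dots,n_k})$. Suppose that $G$ and $G'$ belong to the same one of the following three classes: (Case 1) $G=\Gamma(\text{complete};\ t_i=\mathrm{ss}\text{ for }i\in I,\ t_i=\mathrm{sc}\text{ for }i\notin I)$ for some $I\subseteq[k]$; (Case 2) $G=\Gamma(\text{star toward }j;\ t_j=\mathrm{sc},\ t_i=\mathrm{ss}\text{ for }i\in I,\ t_i=\mathrm{c}\text{ for }i\notin I\cup\{j\})$ for some $j\in[k]$ and $I\subseteq[k]\setminus\{j\}$; (Case 3) the same as Case 2 but with $t_j=\mathrm{c}$; and similarly $G'$ with index set $I'$ (and possibly a different index $j'$). If $|I|=|I'|$, then $G$ and $G'$ are isomorphic.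
   Context: $V=U_1\sqcup\cdots\sqcup U_k$, $|U_i|=n_i$. The clique-star $CS^r_{n_1,\dots,n_k}$: each $U_i$ is a clique, every vertex of $U_r$ is adjacent to every vertex of each $U_i$, $i\ne r$, no edges between $U_i,U_l$ for distinct $i,l\ne r$. The local complement $c_v(G)$ complements the edges among the neighbours of $v$; $\mathcal{O}(G)$ is the set of graphs on $V$ obtainable from $G$ by finite sequences of local complements. Graph family $\Gamma$: each $i$ gets a type $t_i\in\{\mathrm{c},\mathrm{sc},\mathrm{ss}\}$: $\mathrm{c}$: $U_i$ a clique, $R_i=U_i$; $\mathrm{sc}$: $U_i$ independent, $R_i=U_i$; $\mathrm{ss}$: a center $c_i\in U_i$ adjacent to all other vertices of $U_i$, no other internal edges, $R_i=\{c_i\}$. Central type "complete": for all $i\ne l$, all edges between $R_i$ and $R_l$; "star toward $j$": for each $i\ne j$ all edges between $R_i$ and $R_j$, and no other edges between different parts. (Every graph in $\mathcal{O}(CS^r_{n_1,\dots,n_k})$ is of one of the three case forms.) *)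

theory Defs
  imports Main
begin

text \<open>Parts are indexed by 0..<k (instead of 1..k). A simple graph on V is
  represented by its edge set, a set of 2-element subsets of V.\<close>

definition verts :: "nat \<Rightarrow> nat \<Rightarrow> (nat \<times> nat) set" where
  "verts k n = {0..<k} \<times> {0..<n}"

definition part :: "nat \<Rightarrow> nat \<Rightarrow> (nat \<times> nat) set" where
  "part n i = {i} \<times> {0..<n}"

definition clique_star :: "nat \<Rightarrow> nat \<Rightarrow> nat \<Rightarrow> (nat \<times> nat) set set" where
  "clique_star k n r = {{x, y} | x y. x \<in> verts k n \<and> y \<in> verts k n \<and> x \<noteq> y \<and>
      (fst x = fst y \<or> fst x = r \<or> fst y = r)}"

definition nbhd :: "(nat \<times> nat) set set \<Rightarrow> nat \<times> nat \<Rightarrow> (nat \<times> nat) set" where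
  "nbhd E v = {u. {v, u} \<in> E \<and> u \<noteq> v}"

definition local_compl :: "(nat \<times> nat) set set \<Rightarrow> nat \<times> nat \<Rightarrow> (nat \<times> nat) set set" where
  "local_compl E v =
     (let P = {{x, y} | x y. x \<in> nbhd E v \<and> y \<in> nbhd E v \<and> x \<noteq> y}
      in (E - P) \<union> (P - E))"

inductive_set lc_orbit :: "(nat \<times> nat) set \<Rightarrow> (nat \<times> nat) set set \<Rightarrow> (nat \<times> nat) set set set"
  for V E0 where
  base: "E0 \<in> lc_orbit V E0"
| step: "E \<in> lc_orbit V E0 \<Longrightarrow> v \<in> V \<Longrightarrow> local_compl E v \<in> lc_orbit V E0"

datatype ptype = C | SC | SS

datatype ctype = Complete | StarToward nat

definition Rset :: "nat \<Rightarrow> (nat \<Rightarrow> ptype) \<Rightarrow> (nat \<Rightarrow> nat) \<Rightarrow> nat \<Rightarrow> (nat \<times> nat) set" where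
  "Rset n t cen i = (if t i = SS then {(i, cen i)} else part n i)"

definition internal_edges :: "nat \<Rightarrow> (nat \<Rightarrow> ptype) \<Rightarrow> (nat \<Rightarrow> nat) \<Rightarrow> nat \<Rightarrow> (nat \<times> nat) set set" where
  "internal_edges n t cen i =
     (case t i of
        C \<Rightarrow> {{x, y} | x y. x \<in> part n i \<and> y \<in> part n i \<and> x \<noteq> y}
      | SC \<Rightarrow> {}
      | SS \<Rightarrow> {{(i, cen i), y} | y. y \<in> part n i \<and> y \<noteq> (i, cen i)})"

definition Gamma :: "nat \<Rightarrow> nat \<Rightarrow> ctype \<Rightarrow> (nat \<Rightarrow> ptype) \<Rightarrow> (nat \<Rightarrow> nat) \<Rightarrow> (nat \<times> nat) set set" where
  "Gamma k n ct t cen =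
     (\<Union>i\<in>{0..<k}. internal_edges n t cen i) \<union>
     (case ct of
        Complete \<Rightarrow> {{x, y} | x y i l. i < k \<and> l < k \<and> i \<noteq> l \<and> x \<in> Rset n t cen i \<and> y \<in> Rset n t cen l}
      | StarToward j \<Rightarrow> {{x, y} | x y i. i < k \<and> i \<noteq> j \<and> x \<in> Rset n t cen i \<and> y \<in> Rset n t cen j})"

definition valid_centres :: "nat \<Rightarrow> nat \<Rightarrow> (nat \<Rightarrow> nat) \<Rightarrow> bool" where
  "valid_centres k n cen \<longleftrightarrow> (\<forall>i<k. cen i < n)"

definition case1 :: "nat \<Rightarrow> nat \<Rightarrow> (nat \<times> nat) set set \<Rightarrow> nat set \<Rightarrow> bool" where
  "case1 k n G I \<longleftrightarrow> I \<subseteq> {0..<k} \<and>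
     (\<exists>cen. valid_centres k n cen \<and>
        G = Gamma k n Complete (\<lambda>i. if i \<in> I then SS else SC) cen)"

definition case2 :: "nat \<Rightarrow> nat \<Rightarrow> (nat \<times> nat) set set \<Rightarrow> nat set \<Rightarrow> bool" where
  "case2 k n G I \<longleftrightarrow> (\<exists>j<k. I \<subseteq> {0..<k} - {j} \<and>
     (\<exists>cen. valid_centres k n cen \<and>
        G = Gamma k n (StarToward j) (\<lambda>i. if i = j then SC else if i \<in> I then SS else C) cen))"

definition case3 :: "nat \<Rightarrow> nat \<Rightarrow> (nat \<times> nat) set set \<Rightarrow> nat set \<Rightarrow> bool" where
  "case3 k n G I \<longleftrightarrow> (\<exists>j<k. I \<subseteq> {0..<k} - {j} \<and>
     (\<exists>cen. valid_centres k n cen \<and>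
        G = Gamma k n (StarToward j) (\<lambda>i. if i = j then C else if i \<in> I then SS else C) cen))"

definition graph_iso :: "(nat \<times> nat) set \<Rightarrow> (nat \<times> nat) set set \<Rightarrow> (nat \<times> nat) set set \<Rightarrow> bool" where
  "graph_iso V E E' \<longleftrightarrow> (\<exists>f. bij_betw f V V \<and>
     (\<forall>x\<in>V. \<forall>y\<in>V. {x, y} \<in> E \<longleftrightarrow> {f x, f y} \<in> E'))"

end

theory Submission
  imports Defs
begin

definition inR :: "(nat \<Rightarrow> ptype) \<Rightarrow> (nat \<Rightarrow> nat) \<Rightarrow> nat \<times> nat \<Rightarrow> bool" where
 "inR t cen x = (t (fst x) = SS \<longrightarrow> snd x = cen (fst x))"

definition iadj :: "ptype \<Rightarrow> nat \<Rightarrow> nat \<Rightarrow> nat \<Rightarrow> bool" where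
 "iadj p c b d = (case p of C \<Rightarrow> True | SC \<Rightarrow> False | SS \<Rightarrow> b = c \<or> d = c)"

lemma mem_int1:
  assumes "cen i < n"
  shows "{(a,b),(c,d)} \<in> internal_edges n t cen i \<longleftrightarrow> (a,b) \<noteq> (c,d) \<and> a = i \<and> c = i \<and> b < n \<and> d < n \<and>
     iadj (t i) (cen i) b d"
proof (cases "t i")
  case C thus ?thesis by (auto simp: iadj_def internal_edges_def part_def doubleton_eq_iff)
next
  case SC thus ?thesis by (auto simp: iadj_def internal_edges_def part_def doubleton_eq_iff)
next
  case SS thus ?thesis using assms by (auto simp: iadj_def internal_edges_def part_def doubleton_eq_iff)
qed

lemma mem_internal:
  assumes "x \<in> verts k n" "y \<in> verts k n" "valid_centres k n cen"
  shows "{x,y} \<in> (\<Union>i\<in>{0..<k}. internal_edges n t cen i) \<longleftrightarrow> x \<noteq> y \<and> fst x = fst y \<and>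
     iadj (t (fst x)) (cen (fst x)) (snd x) (snd y)"
  using assms
  apply (cases x; cases y)
  apply (auto simp: mem_int1 verts_def valid_centres_def)
  done

lemma mem_R:
  assumes "i < k" "valid_centres k n cen"
  shows "x \<in> Rset n t cen i \<longleftrightarrow> fst x = i \<and> snd x < n \<and> inR t cen x"
  using assms by (cases x) (auto simp: Rset_def part_def inR_def valid_centres_def)

lemma mem_cross_complete:
  assumes "x \<in> verts k n" "y \<in> verts k n" "valid_centres k n cen"
  shows "{x,y} \<in> {{x, y} | x y i l. i < k \<and> l < k \<and> i \<noteq> l \<and> x \<in> Rset n t cen i \<and> y \<in> Rset n t cen l}
    \<longleftrightarrow> fst x \<noteq> fst y \<and> inR t cen x \<and> inR t cen y" (is "?L = ?R")
proof
  assume ?L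
  then obtain x' y' i l where "{x,y} = {x',y'}" "i < k" "l < k" "i \<noteq> l" "x' \<in> Rset n t cen i" "y' \<in> Rset n t cen l"
    by blast
  then show ?R using assms by (auto simp: mem_R doubleton_eq_iff)
next
  assume ?R
  moreover have "x \<in> Rset n t cen (fst x)" "y \<in> Rset n t cen (fst y)" "fst x < k" "fst y < k"
    using assms \<open>?R\<close> by (auto simp: mem_R verts_def)
  ultimately show ?L by blast
qed

lemma mem_cross_star:
  assumes "x \<in> verts k n" "y \<in> verts k n" "valid_centres k n cen" "j < k"
  shows "{x,y} \<in> {{x, y} | x y i. i < k \<and> i \<noteq> j \<and> x \<in> Rset n t cen i \<and> y \<in> Rset n t cen j}
    \<longleftrightarrow> fst x \<noteq> fst y \<and> inR t cen x \<and> inR t cen y \<and> (fst x = j \<or> fst y = j)" (is "?L = ?R")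
proof
  assume ?L
  then obtain x' y' i where "{x,y} = {x',y'}" "i < k" "i \<noteq> j" "x' \<in> Rset n t cen i" "y' \<in> Rset n t cen j"
    by blast
  then show ?R using assms by (auto simp: mem_R doubleton_eq_iff)
next
  assume R: ?R
  show ?L
  proof (cases "fst y = j")
    case True
    moreover have "x \<in> Rset n t cen (fst x)" "y \<in> Rset n t cen j" "fst x < k"
      using assms R True by (auto simp: mem_R verts_def)
    ultimately show ?thesis using R by blast
  next
    case False
    then have "fst x = j" using R by auto
    moreover have "y \<in> Rset n t cen (fst y)" "x \<in> Rset n t cen j" "fst y < k" "{x,y} = {y,x}"
      using assms R False by (auto simp: mem_R verts_def)
    ultimately show ?thesis using R False by blast
  qed
qed

lemma mem_Gamma:
  assumes "x \<in> verts k n" "y \<in> verts k n" "valid_centres k n cen"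
    "\<And>j. ct = StarToward j \<Longrightarrow> j < k"
  shows "{x,y} \<in> Gamma k n ct t cen \<longleftrightarrow>
    (x \<noteq> y \<and> fst x = fst y \<and> iadj (t (fst x)) (cen (fst x)) (snd x) (snd y)) \<or>
    (fst x \<noteq> fst y \<and> inR t cen x \<and> inR t cen y \<and> (case ct of Complete \<Rightarrow> True | StarToward j \<Rightarrow> fst x = j \<or> fst y = j))"
proof (cases ct)
  case Complete
  then show ?thesis unfolding Gamma_def Complete ctype.case(1) Un_iff
      mem_internal[OF assms(1-3)] mem_cross_complete[OF assms(1-3)] by auto
next
  case (StarToward j)
  then have j: "j < k" using assms by auto
  show ?thesis unfolding Gamma_def StarToward ctype.case(2) Un_iff
      mem_internal[OF assms(1-3)] mem_cross_star[OF assms(1-3) j] by auto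
qed

definition tau :: "nat \<Rightarrow> nat \<Rightarrow> nat \<Rightarrow> nat" where
  "tau c c' a = (if a = c then c' else if a = c' then c else a)"

lemma tau_inv[simp]: "tau c c' (tau c c' a) = a" by (auto simp: tau_def)
lemma tau_eq[simp]: "tau c c' a = tau c c' b \<longleftrightarrow> a = b" by (metis tau_inv)
lemma tau_c'[simp]: "tau c c' a = c' \<longleftrightarrow> a = c" by (auto simp: tau_def)
lemma tau_lt: "a < n \<Longrightarrow> c < n \<Longrightarrow> c' < n \<Longrightarrow> tau c c' a < n" by (auto simp: tau_def)

lemma gamma_iso:
  assumes bij: "bij_betw \<sigma> {0..<k} {0..<k}"
    and tt: "\<And>i. i < k \<Longrightarrow> t' (\<sigma> i) = t i"
    and vc: "valid_centres k n cen" and vc': "valid_centres k n cen'"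
    and ct: "(ct = Complete \<and> ct' = Complete) \<or> (\<exists>j. j < k \<and> ct = StarToward j \<and> ct' = StarToward (\<sigma> j))"
  shows "graph_iso (verts k n) (Gamma k n ct t cen) (Gamma k n ct' t' cen')"
proof -
  define f where "f = (\<lambda>(i,a). (\<sigma> i, tau (cen i) (cen' (\<sigma> i)) a))"
  have sk: "\<sigma> i < k" if "i < k" for i using bij that by (auto simp: bij_betw_def)
  have sinj: "\<sigma> i = \<sigma> l \<longleftrightarrow> i = l" if "i < k" "l < k" for i l
    using bij that by (auto simp: bij_betw_def inj_on_def)
  have fV: "f x \<in> verts k n" if "x \<in> verts k n" for x
    using that vc vc' sk by (auto simp: f_def verts_def valid_centres_def intro!: tau_lt)
  have finj: "inj_on f (verts k n)"
    by (auto simp: inj_on_def f_def verts_def sinj)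
  have fsurj: "verts k n \<subseteq> f ` verts k n"
  proof
    fix z assume z: "z \<in> verts k n"
    obtain i' b where zz: "z = (i', b)" "i' < k" "b < n" using z by (auto simp: verts_def)
    obtain i where i: "i < k" "\<sigma> i = i'" using bij zz(2)
      by (metis atLeastLessThan_iff bij_betw_iff_bijections zero_le)
    have "(i, tau (cen i) (cen' (\<sigma> i)) b) \<in> verts k n"
      using i zz vc vc' sk by (auto simp: verts_def valid_centres_def intro!: tau_lt)
    moreover have "f (i, tau (cen i) (cen' (\<sigma> i)) b) = z" using i zz by (simp add: f_def)
    ultimately show "z \<in> f ` verts k n" by force
  qed
  have fbij: "bij_betw f (verts k n) (verts k n)"
    using finj fsurj fV by (auto simp: bij_betw_def)
  have ctk: "\<And>j. ct = StarToward j \<Longrightarrow> j < k" using ct by auto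
  have ctk': "\<And>j. ct' = StarToward j \<Longrightarrow> j < k" using ct sk by auto
  show ?thesis unfolding graph_iso_def
  proof (intro exI conjI ballI)
    show "bij_betw f (verts k n) (verts k n)" by fact
  next
    fix x y assume x: "x \<in> verts k n" and y: "y \<in> verts k n"
    obtain a b where xa: "x = (a,b)" "a < k" "b < n" using x by (auto simp: verts_def)
    obtain c d where yc: "y = (c,d)" "c < k" "d < n" using y by (auto simp: verts_def)
    have ia: "iadj (t' (\<sigma> a)) (cen' (\<sigma> a)) (tau (cen a) (cen' (\<sigma> a)) b) (tau (cen a) (cen' (\<sigma> a)) d)
       = iadj (t a) (cen a) b d"
      using xa tt by (auto simp: iadj_def split: ptype.splits)
    have r1: "inR t' cen' (f x) = inR t cen x" using xa tt by (auto simp: inR_def f_def)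
    have r2: "inR t' cen' (f y) = inR t cen y" using yc tt by (auto simp: inR_def f_def)
    have cc: "(case ct' of Complete \<Rightarrow> True | StarToward j \<Rightarrow> fst (f x) = j \<or> fst (f y) = j)
       = (case ct of Complete \<Rightarrow> True | StarToward j \<Rightarrow> fst x = j \<or> fst y = j)"
      using ct xa yc by (auto simp: f_def sinj)
    show "({x, y} \<in> Gamma k n ct t cen) = ({f x, f y} \<in> Gamma k n ct' t' cen')"
      using mem_Gamma[where ct=ct and t=t, OF x y vc ctk] mem_Gamma[where ct=ct' and t=t', OF fV[OF x] fV[OF y] vc' ctk'] cc r1 r2
        xa yc ia by (auto simp: f_def sinj)
  qed
qed

lemma perm_exists:
  assumes "finite S" "card S = card S'" "finite S'" "A \<subseteq> S" "A' \<subseteq> S'" "card A = card A'"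
  shows "\<exists>\<sigma>. bij_betw \<sigma> S S' \<and> (\<forall>i\<in>S. \<sigma> i \<in> A' \<longleftrightarrow> i \<in> A)"
proof -
  have fA: "finite A" "finite A'" using assms finite_subset by auto
  obtain g where g: "bij_betw g A A'" using finite_same_card_bij[OF fA] assms by auto
  have "card (S - A) = card (S' - A')" using assms fA by (simp add: card_Diff_subset)
  then obtain h where h: "bij_betw h (S - A) (S' - A')"
    using finite_same_card_bij[of "S - A" "S' - A'"] assms by auto
  define \<sigma> where "\<sigma> = (\<lambda>i. if i \<in> A then g i else h i)"
  have b1: "bij_betw \<sigma> A A'" using g by (rule bij_betw_cong[THEN iffD1, rotated]) (simp add: \<sigma>_def)
  have b2: "bij_betw \<sigma> (S - A) (S' - A')" using h by (rule bij_betw_cong[THEN iffD1, rotated]) (simp add: \<sigma>_def)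
  have "bij_betw \<sigma> (A \<union> (S - A)) (A' \<union> (S' - A'))"
    by (rule bij_betw_combine[OF b1 b2]) auto
  moreover have "A \<union> (S - A) = S" "A' \<union> (S' - A') = S'" using assms by auto
  ultimately have "bij_betw \<sigma> S S'" by simp
  moreover have "\<forall>i\<in>S. \<sigma> i \<in> A' \<longleftrightarrow> i \<in> A"
    using b1 b2 by (auto simp: bij_betw_def)
  ultimately show ?thesis by blast
qed

lemma iso_case1:
  assumes "case1 k n G I" "case1 k n G' I'" "card I = card I'"
  shows "graph_iso (verts k n) G G'"
proof -
  obtain cen where c: "I \<subseteq> {0..<k}" "valid_centres k n cen" "G = Gamma k n Complete (\<lambda>i. if i \<in> I then SS else SC) cen"
    using assms(1) by (auto simp: case1_def)
  obtain cen' where c': "I' \<subseteq> {0..<k}" "valid_centres k n cen'" "G' = Gamma k n Complete (\<lambda>i. if i \<in> I' then SS else SC) cen'"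
    using assms(2) by (auto simp: case1_def)
  obtain \<sigma> where s: "bij_betw \<sigma> {0..<k} {0..<k}" "\<forall>i\<in>{0..<k}. \<sigma> i \<in> I' \<longleftrightarrow> i \<in> I"
    using perm_exists[of "{0..<k}" "{0..<k}" I I'] c c' assms(3) by auto
  show ?thesis unfolding c(3) c'(3)
    by (rule gamma_iso[OF s(1) _ c(2) c'(2)]) (use s(2) in auto)
qed

lemma iso_case23:
  assumes g: "j < k" "I \<subseteq> {0..<k} - {j}" "valid_centres k n cen"
    and g': "j' < k" "I' \<subseteq> {0..<k} - {j'}" "valid_centres k n cen'"
    and "card I = card I'"
  shows "graph_iso (verts k n) (Gamma k n (StarToward j) (\<lambda>i. if i = j then p else if i \<in> I then SS else C) cen)
     (Gamma k n (StarToward j') (\<lambda>i. if i = j' then p else if i \<in> I' then SS else C) cen')"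
proof -
  have "card ({0..<k} - {j}) = card ({0..<k} - {j'})" using g g' by simp
  then obtain \<sigma>0 where s: "bij_betw \<sigma>0 ({0..<k} - {j}) ({0..<k} - {j'})"
      "\<forall>i\<in>{0..<k} - {j}. \<sigma>0 i \<in> I' \<longleftrightarrow> i \<in> I"
    using perm_exists[of "{0..<k} - {j}" "{0..<k} - {j'}" I I'] g g' assms(7) by auto
  define \<sigma> where "\<sigma> = (\<lambda>i. if i = j then j' else \<sigma>0 i)"
  have b1: "bij_betw \<sigma> ({0..<k} - {j}) ({0..<k} - {j'})"
    using s(1) by (rule bij_betw_cong[THEN iffD1, rotated]) (simp add: \<sigma>_def)
  have b0: "bij_betw \<sigma> {j} {j'}" by (simp add: \<sigma>_def)
  have "bij_betw \<sigma> ({j} \<union> ({0..<k} - {j})) ({j'} \<union> ({0..<k} - {j'}))"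
    by (rule bij_betw_combine[OF b0 b1]) auto
  moreover have "{j} \<union> ({0..<k} - {j}) = {0..<k}" "{j'} \<union> ({0..<k} - {j'}) = {0..<k}" using g g' by auto
  ultimately have b: "bij_betw \<sigma> {0..<k} {0..<k}" by simp
  have im: "\<sigma> i \<in> {0..<k} - {j'}" if "i < k" "i \<noteq> j" for i
    using b1 that by (auto simp: bij_betw_def)
  show ?thesis
  proof (rule gamma_iso[OF b _ g(3) g'(3)])
    fix i assume i: "i < k"
    show "(if \<sigma> i = j' then p else if \<sigma> i \<in> I' then SS else C) = (if i = j then p else if i \<in> I then SS else C)"
    proof (cases "i = j")
      case True then show ?thesis by (simp add: \<sigma>_def)
    next
      case False
      then have "\<sigma> i \<noteq> j'" "\<sigma> i = \<sigma>0 i" using im[OF i] by (auto simp: \<sigma>_def)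
      then show ?thesis using s(2) i False by auto
    qed
  next
    show "(StarToward j = Complete \<and> StarToward j' = Complete) \<or>
      (\<exists>ja. ja < k \<and> StarToward j = StarToward ja \<and> StarToward j' = StarToward (\<sigma> ja))"
      using g by (auto simp: \<sigma>_def)
  qed
qed

theorem lemma8:
  fixes k n r :: nat and G G' :: "(nat \<times> nat) set set" and I I' :: "nat set"
  assumes "k \<ge> 3" and "n \<ge> 2" and "r < k"
    and "G \<in> lc_orbit (verts k n) (clique_star k n r)"
    and "G' \<in> lc_orbit (verts k n) (clique_star k n r)"
    and "(case1 k n G I \<and> case1 k n G' I') \<or>
         (case2 k n G I \<and> case2 k n G' I') \<or>
         (case3 k n G I \<and> case3 k n G' I')"
    and "card I = card I'"
  shows "graph_iso (verts k n) G G'"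
  using assms(6)
proof (elim disjE conjE)
  assume "case1 k n G I" "case1 k n G' I'"
  then show ?thesis using iso_case1 assms(7) by blast
next
  assume "case2 k n G I" "case2 k n G' I'"
  then show ?thesis unfolding case2_def using iso_case23[of _ k I n _ _ I' _ SC] assms(7) by blast
next
  assume "case3 k n G I" "case3 k n G' I'"
  then show ?thesis unfolding case3_def using iso_case23[of _ k I n _ _ I' _ C] assms(7) by blast
qed

end
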